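(* Let $d\ge 2$ and let $V,W\in SU(d)$. The following are equivalent: (i) there exists a non-trivial tester $\mathcal{T}=(|\psi\rangle,\{|\chi_i\rangle\langle\chi_i|\}_{i=1}^d)$ such that $$H(\mathcal{T}|V)+H(\mathcal{T}|W)=0;$$ (ii) $V$ and $W$ are perfectly distinguishable, i.e. there exists a unit vector $|\phi\rangle\in\mathbb{C}^d$ with $\langle\phi|V^\dagger W|\phi\rangle=0$.
   Context: A tester is a pair $\mathcal{T}=(|\psi\rangle,\{|\chi_i\rangle\langle\chi_i|\}_{i=1}^d)$ consisting of a unit vector $|\psi\rangle\in\mathbb{C}^d$ (the input) and an orthonormal basis $\{|\chi_i\rangle\}_{i=1}^d$ of $\mathbb{C}^d$ (a projective measurement). For a unitary $U$, the entropy of testing $U$ with $\mathcal{T}$ is the Shannon entropy of the outcome distribution: $$H(\mathcal{T}|U)=-\sum_{i=1}^d|\langle\chi_i|U|\psi\rangle|^2\log|\langle\chi_i|U|\psi\rangle|^2,$$ with the convention $0\log 0=0$. For the pair $V,W$, a tester is called trivial if the two evolved inputs $V|\psi\rangle$ and $W|\psi\rangle$ are equal up to a global phase. In particular, this covers the situation where the input is sent by $V$ to a basis vector $|\chi_i\rangle$ that is an eigenvector of $WV^\dagger$. A tester is non-trivial otherwise. *)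

theory Defs
  imports "HOL-Analysis.Analysis"
begin

text \<open>Vectors in C^d are \<open>complex ^ 'n\<close> with d = CARD('n); d x d matrices are \<open>complex ^ 'n ^ 'n\<close>.\<close>

definition braket :: "complex ^ 'n \<Rightarrow> complex ^ 'n \<Rightarrow> complex" where
  "braket x y = (\<Sum>i\<in>UNIV. cnj (x $ i) * y $ i)"

definition adjoint_mat :: "complex ^ 'n ^ 'm \<Rightarrow> complex ^ 'm ^ 'n" where
  "adjoint_mat A = (\<chi> i j. cnj (A $ j $ i))"

definition unit_vec :: "complex ^ 'n \<Rightarrow> bool" where
  "unit_vec x \<longleftrightarrow> braket x x = 1"

definition unitary_mat :: "complex ^ 'n ^ 'n \<Rightarrow> bool" where
  "unitary_mat U \<longleftrightarrow> U ** adjoint_mat U = mat 1 \<and> adjoint_mat U ** U = mat 1"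

definition special_unitary :: "complex ^ 'n ^ 'n \<Rightarrow> bool" where
  "special_unitary U \<longleftrightarrow> unitary_mat U \<and> det U = 1"

definition orthonormal_basis :: "('n \<Rightarrow> complex ^ 'n) \<Rightarrow> bool" where
  "orthonormal_basis chi \<longleftrightarrow>
     (\<forall>i j. braket (chi i) (chi j) = (if i = j then 1 else 0))"

definition tester :: "complex ^ 'n \<Rightarrow> ('n \<Rightarrow> complex ^ 'n) \<Rightarrow> bool" where
  "tester psi chi \<longleftrightarrow> unit_vec psi \<and> orthonormal_basis chi"

definition xlogx :: "real \<Rightarrow> real" where
  "xlogx p = (if p = 0 then 0 else p * ln p)"

definition entropy_test :: "complex ^ 'n \<Rightarrow> ('n \<Rightarrow> complex ^ 'n) \<Rightarrow> complex ^ 'n ^ 'n \<Rightarrow> real" where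
  "entropy_test psi chi U =
     - (\<Sum>i\<in>UNIV. xlogx ((cmod (braket (chi i) (U *v psi)))\<^sup>2))"

definition trivial_tester ::
  "complex ^ 'n \<Rightarrow> ('n \<Rightarrow> complex ^ 'n) \<Rightarrow> complex ^ 'n ^ 'n \<Rightarrow> complex ^ 'n ^ 'n \<Rightarrow> bool" where
  "trivial_tester psi chi V W \<longleftrightarrow> (\<exists>c. cmod c = 1 \<and> W *v psi = c *s (V *v psi))"

end

theory Submission imports Defs begin

lemma braket_add_right: "braket x (y + z) = braket x y + braket x z"
  by (simp add: braket_def distrib_left sum.distrib)
lemma braket_add_left: "braket (x + y) z = braket x z + braket y z"
  by (simp add: braket_def distrib_right sum.distrib)
lemma braket_diff_right: "braket x (y - z) = braket x y - braket x z"
  by (simp add: braket_def right_diff_distrib sum_subtractf)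
lemma braket_diff_left: "braket (x - y) z = braket x z - braket y z"
  by (simp add: braket_def left_diff_distrib sum_subtractf)
lemma braket_scale_right: "braket x (c *s y) = c * braket x y"
  by (simp add: braket_def sum_distrib_left algebra_simps)
lemma braket_scale_left: "braket (c *s x) y = cnj c * braket x y"
  by (simp add: braket_def sum_distrib_left algebra_simps)
lemma braket_cnj: "cnj (braket x y) = braket y x"
  by (simp add: braket_def mult.commute)
lemma braket_self: "braket x x = of_real (\<Sum>i\<in>UNIV. (cmod (x $ i))\<^sup>2)"
proof -
  have "\<And>i. cnj (x $ i) * x $ i = of_real ((cmod (x $ i))\<^sup>2)"
    by (metis complex_norm_square mult.commute of_real_power)
  thus ?thesis by (simp add: braket_def of_real_sum)
qed
lemma braket_self_zero: "braket x x = 0 \<longleftrightarrow> x = 0"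
proof
  assume "braket x x = 0"
  hence "(\<Sum>i\<in>UNIV. (cmod (x $ i))\<^sup>2) = 0" unfolding braket_self of_real_eq_0_iff .
  hence "\<forall>i. (cmod (x $ i))\<^sup>2 = 0" by (subst (asm) sum_nonneg_eq_0_iff) auto
  thus "x = 0" by (simp add: vec_eq_iff)
qed (simp add: braket_def)
lemma braket_self_real: "cnj (braket x x) = braket x x"
  by (simp add: braket_self)
lemma braket_zero_left[simp]: "braket 0 x = 0" by (simp add: braket_def)
lemma braket_zero_right[simp]: "braket x 0 = 0" by (simp add: braket_def)

lemma braket_mat: "braket x (A *v y) = braket (adjoint_mat A *v x) y"
proof -
  have "braket x (A *v y) = (\<Sum>i\<in>UNIV. \<Sum>j\<in>UNIV. cnj (x $ i) * (A $ i $ j * y $ j))"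
    by (simp add: braket_def matrix_vector_mult_def sum_distrib_left)
  also have "\<dots> = (\<Sum>j\<in>UNIV. \<Sum>i\<in>UNIV. cnj (x $ i) * (A $ i $ j * y $ j))"
    by (rule sum.swap)
  also have "\<dots> = braket (adjoint_mat A *v x) y"
    by (simp add: braket_def matrix_vector_mult_def adjoint_mat_def sum_distrib_right sum_distrib_left algebra_simps)
  finally show ?thesis .
qed

lemma adjoint_adjoint[simp]: "adjoint_mat (adjoint_mat A) = A"
  by (simp add: adjoint_mat_def vec_eq_iff)

lemma unitary_braket:
  assumes "unitary_mat V" shows "braket (V *v x) (V *v y) = braket x y"
  using assms by (simp add: braket_mat matrix_vector_mul_assoc unitary_mat_def)

lemma braket_prod: "braket phi ((adjoint_mat V ** W) *v phi) = braket (V *v phi) (W *v phi)"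
  by (simp add: braket_mat matrix_vector_mul_assoc[symmetric])

definition hh :: "complex ^ 'n \<Rightarrow> complex ^ 'n \<Rightarrow> complex ^ 'n" where
  "hh v x = x - (2 * braket v x / braket v v) *s v"

lemma hh_braket: "braket (hh v x) (hh v y) = braket x y"
proof (cases "braket v v = 0")
  case True thus ?thesis by (simp add: hh_def braket_self_zero)
next
  case False
  define n where "n = braket v v"
  have cn: "cnj n = n" unfolding n_def by (rule braket_self_real)
  have xv: "braket x v = cnj (braket v x)" by (simp add: braket_cnj)
  show ?thesis
    unfolding hh_def braket_diff_left braket_diff_right braket_scale_left braket_scale_right
    using False cn unfolding n_def[symmetric] xv
    by (simp add: field_simps)
qed

lemma hh_invol: "hh v (hh v x) = x"
proof (cases "braket v v = 0")
  case True thus ?thesis by (simp add: hh_def braket_self_zero)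
next
  case False
  have "braket v (hh v x) = - braket v x"
    using False by (simp add: hh_def braket_diff_right braket_scale_right)
  thus ?thesis using False
    by (simp add: hh_def vec_eq_iff field_simps)
qed

lemma hh_fix: "braket v x = 0 \<Longrightarrow> hh v x = x"
  by (simp add: hh_def)

lemma hh_map:
  assumes "unit_vec x" "unit_vec y" "cnj (braket x y) = braket x y"
  shows "hh (x - y) x = y"
proof -
  define r where "r = braket x y"
  have yx: "braket y x = r" by (metis assms(3) braket_cnj r_def)
  have xx: "braket x x = 1" "braket y y = 1" using assms by (auto simp: unit_vec_def)
  have vx: "braket (x - y) x = 1 - r" using yx xx by (simp add: braket_diff_left)
  have vv: "braket (x - y) (x - y) = 2 - 2 * r"
    using yx xx by (simp add: braket_diff_left braket_diff_right r_def)
  show ?thesis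
  proof (cases "r = 1")
    case True
    hence "braket (x - y) (x - y) = 0" using vv by simp
    hence "x = y" by (simp add: braket_self_zero)
    thus ?thesis by (simp add: hh_def)
  next
    case False
    hence nz: "2 - 2 * r \<noteq> 0" by simp
    have "2 * braket (x - y) x / braket (x - y) (x - y) = (2 - 2 * r) / (2 - 2 * r)"
      unfolding vx vv by (simp add: right_diff_distrib)
    hence "2 * braket (x - y) x / braket (x - y) (x - y) = 1" using nz by simp
    thus ?thesis by (simp add: hh_def)
  qed
qed


lemma hh_scale: "hh v (c *s x) = c *s hh v x"
  by (simp add: hh_def braket_scale_right vec_eq_iff algebra_simps)

lemma braket_axis: "braket (axis i 1) x = x $ i"
proof -
  have "\<And>j. cnj (axis i 1 $ j) * x $ j = (if j = i then x $ j else 0)" by (simp add: axis_def)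
  thus ?thesis by (simp add: braket_def)
qed

lemma braket_axis_axis: "braket (axis i 1) (axis j (1::complex)) = (if i = j then 1 else 0)"
  unfolding braket_axis by (simp add: axis_def)

lemma phase_exists: "\<exists>c. cmod c = 1 \<and> cnj (c * z) = c * z"
proof (cases "z = 0")
  case True thus ?thesis by (intro exI[of _ 1]) simp
next
  case False
  have "cnj z / cmod z * z = of_real (cmod z)"
    using False by (simp add: complex_norm_square[symmetric] power2_eq_square field_simps mult.commute)
  thus ?thesis using False
    by (intro exI[of _ "cnj z / cmod z"]) (simp add: norm_divide)
qed

lemma unit_scale: "unit_vec x \<Longrightarrow> cmod c = 1 \<Longrightarrow> unit_vec (c *s x)"
  by (simp add: unit_vec_def braket_scale_left braket_scale_right complex_norm_square[symmetric] mult.commute)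

lemma cnj_mult_unit: "cmod c = 1 \<Longrightarrow> cnj c * c = 1"
  by (metis complex_norm_square mult.commute of_real_1 one_power2)

lemma entropy_zero:
  assumes ob: "orthonormal_basis chi" and c: "cmod c = 1" and ch: "chi a = c *s (U *v psi)"
  shows "entropy_test psi chi U = 0"
proof -
  have "cnj c *s chi a = U *v psi"
    using ch cnj_mult_unit[OF c] by (simp add: vector_smult_assoc)
  hence x: "U *v psi = cnj c *s chi a" by simp
  have "\<And>i. xlogx ((cmod (braket (chi i) (U *v psi)))\<^sup>2) = 0"
  proof -
    fix i
    have "braket (chi i) (U *v psi) = cnj c * (if i = a then 1 else 0)"
      using ob unfolding x orthonormal_basis_def by (simp add: braket_scale_right)
    thus "xlogx ((cmod (braket (chi i) (U *v psi)))\<^sup>2) = 0"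
      using c by (simp add: xlogx_def norm_mult)
  qed
  thus ?thesis by (simp add: entropy_test_def)
qed

lemma expansion:
  fixes chi :: "'n \<Rightarrow> complex^'n"
  assumes ob: "orthonormal_basis chi"
  shows "x = (\<Sum>i\<in>UNIV. braket (chi i) x *s chi i)"
proof -
  define M :: "complex^'n^'n" where "M = (\<chi> i j. cnj (chi i $ j))"
  have "M ** adjoint_mat M = mat 1"
    using ob unfolding orthonormal_basis_def
    by (simp add: M_def adjoint_mat_def matrix_matrix_mult_def mat_def vec_eq_iff braket_def)
  hence "adjoint_mat M ** M = mat 1" by (simp add: matrix_left_right_inverse)
  hence "x = adjoint_mat M *v (M *v x)" by (simp add: matrix_vector_mul_assoc)
  also have "\<dots> = (\<Sum>i\<in>UNIV. braket (chi i) x *s chi i)"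
    by (simp add: M_def adjoint_mat_def matrix_vector_mult_def vec_eq_iff braket_def sum_component mult.commute)
  finally show ?thesis .
qed

lemma braket_sum_right: "braket x (\<Sum>i\<in>A. f i) = (\<Sum>i\<in>A. braket x (f i))"
  by (induction A rule: infinite_finite_induct) (auto simp: braket_add_right)

lemma parseval:
  assumes ob: "orthonormal_basis chi"
  shows "braket x x = of_real (\<Sum>i\<in>UNIV. (cmod (braket (chi i) x))\<^sup>2)"
proof -
  have "braket x x = braket x (\<Sum>i\<in>UNIV. braket (chi i) x *s chi i)"
    using expansion[OF ob] by metis
  also have "\<dots> = (\<Sum>i\<in>UNIV. braket (chi i) x * cnj (braket (chi i) x))"
    by (simp add: braket_sum_right braket_scale_right braket_cnj)
  also have "\<dots> = (\<Sum>i\<in>UNIV. of_real ((cmod (braket (chi i) x))\<^sup>2))"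
    by (rule sum.cong[OF refl]) (metis complex_norm_square of_real_power)
  also have "\<dots> = of_real (\<Sum>i\<in>UNIV. (cmod (braket (chi i) x))\<^sup>2)"
    by (simp add: of_real_sum)
  finally show ?thesis .
qed

lemma xlogx_nonpos: "0 \<le> p \<Longrightarrow> p \<le> 1 \<Longrightarrow> xlogx p \<le> 0"
  by (simp add: xlogx_def mult_nonneg_nonpos)

lemma entropy_analysis:
  assumes ob: "orthonormal_basis chi" and u: "unit_vec (U *v psi)"
  shows "entropy_test psi chi U \<ge> 0"
    and "entropy_test psi chi U = 0 \<Longrightarrow> \<exists>a c. cmod c = 1 \<and> U *v psi = c *s chi a"
proof -
  define x where "x = U *v psi"
  define p where "p i = (cmod (braket (chi i) x))\<^sup>2" for i
  have sum1: "(\<Sum>i\<in>UNIV. p i) = 1"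
    using parseval[OF ob, of x] u unfolding unit_vec_def x_def[symmetric] p_def
    by (metis of_real_eq_1_iff)
  have p0: "\<And>i. p i \<ge> 0" by (simp add: p_def)
  have p1: "\<And>i. p i \<le> 1"
  proof -
    fix i
    have "p i \<le> (\<Sum>i\<in>UNIV. p i)" by (rule member_le_sum) (auto simp: p0)
    thus "p i \<le> 1" using sum1 by simp
  qed
  have E: "entropy_test psi chi U = (\<Sum>i\<in>UNIV. - xlogx (p i))"
    by (simp add: entropy_test_def p_def x_def sum_negf)
  have tn': "xlogx (p i) \<le> 0" for i using xlogx_nonpos[of "p i"] p0[of i] p1[of i] by simp
  have tn: "- xlogx (p i) \<ge> 0" for i using tn'[of i] by simp
  show "entropy_test psi chi U \<ge> 0" unfolding E by (rule sum_nonneg) (rule tn)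
  assume "entropy_test psi chi U = 0"
  hence "\<forall>i\<in>UNIV. - xlogx (p i) = 0" unfolding E
    by (subst (asm) sum_nonneg_eq_0_iff) (auto simp: tn')
  hence pz0: "\<And>i. p i = 0 \<or> ln (p i) = 0"
    by (auto simp: xlogx_def split: if_splits)
  have pz: "p i = 0 \<or> p i = 1" for i
    using pz0[of i] p0[of i] ln_eq_zero_iff[of "p i"] by (auto simp: order_le_less)
  obtain a where pa: "p a \<noteq> 0"
  proof (rule ccontr)
    assume "\<not> thesis"
    hence "\<forall>i. p i = 0" using that by blast
    thus False using sum1 by simp
  qed
  hence pa1: "p a = 1" using pz by blast
  have "(\<Sum>i\<in>UNIV. p i) = p a + (\<Sum>i\<in>UNIV - {a}. p i)"
    by (simp add: sum.remove)
  hence "(\<Sum>i\<in>UNIV - {a}. p i) = 0" using sum1 pa1 by simp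
  hence "\<forall>i\<in>UNIV - {a}. p i = 0" by (subst (asm) sum_nonneg_eq_0_iff) (auto simp: p0)
  hence bz: "\<And>i. i \<noteq> a \<Longrightarrow> braket (chi i) x = 0" by (auto simp: p_def)
  have "x = (\<Sum>i\<in>UNIV. braket (chi i) x *s chi i)" by (rule expansion[OF ob])
  also have "\<dots> = braket (chi a) x *s chi a"
    by (subst sum.remove[of UNIV a]) (auto simp: bz intro!: sum.neutral)
  finally have "x = braket (chi a) x *s chi a" .
  moreover have "cmod (braket (chi a) x) = 1"
    using pa1 norm_ge_zero[of "braket (chi a) x"] unfolding p_def power2_eq_1_iff by linarith
  ultimately show "\<exists>a c. cmod c = 1 \<and> U *v psi = c *s chi a" unfolding x_def by blast
qed

theorem proposition1:
  fixes V W :: "complex ^ 'n ^ 'n"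
  assumes "CARD('n) \<ge> 2"
    and "special_unitary V" and "special_unitary W"
  shows "(\<exists>psi chi. tester psi chi \<and> \<not> trivial_tester psi chi V W \<and>
            entropy_test psi chi V + entropy_test psi chi W = 0)
         \<longleftrightarrow> (\<exists>phi. unit_vec phi \<and> braket phi ((adjoint_mat V ** W) *v phi) = 0)"
proof
  have uV: "unitary_mat V" and uW: "unitary_mat W" using assms by (auto simp: special_unitary_def)
  assume "\<exists>psi chi. tester psi chi \<and> \<not> trivial_tester psi chi V W \<and>
            entropy_test psi chi V + entropy_test psi chi W = 0"
  then obtain psi chi where t: "tester psi chi" and nt: "\<not> trivial_tester psi chi V W"
    and e: "entropy_test psi chi V + entropy_test psi chi W = 0" by blast
  have ob: "orthonormal_basis chi" and up: "unit_vec psi" using t by (auto simp: tester_def)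
  have uVp: "unit_vec (V *v psi)" and uWp: "unit_vec (W *v psi)"
    using up unitary_braket[OF uV] unitary_braket[OF uW] by (auto simp: unit_vec_def)
  note aV = entropy_analysis[OF ob uVp] and aW = entropy_analysis[OF ob uWp]
  have "entropy_test psi chi V = 0" "entropy_test psi chi W = 0" using aV(1) aW(1) e by linarith+
  then obtain a c1 b c2 where c1: "cmod c1 = 1" "V *v psi = c1 *s chi a"
    and c2: "cmod c2 = 1" "W *v psi = c2 *s chi b" using aV(2) aW(2) by metis
  have "a \<noteq> b"
  proof
    assume "a = b"
    have "c1 \<noteq> 0" using c1 by auto
    hence "W *v psi = (c2 / c1) *s (V *v psi)" using c1 c2 \<open>a = b\<close> by (simp add: vector_smult_assoc)
    moreover have "cmod (c2 / c1) = 1" using c1 c2 by (simp add: norm_divide)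
    ultimately show False using nt by (auto simp: trivial_tester_def)
  qed
  hence "braket (V *v psi) (W *v psi) = 0" using ob c1 c2
    by (simp add: braket_scale_left braket_scale_right orthonormal_basis_def)
  thus "\<exists>phi. unit_vec phi \<and> braket phi ((adjoint_mat V ** W) *v phi) = 0"
    using up by (auto simp: braket_prod)
next
  have uV: "unitary_mat V" and uW: "unitary_mat W" using assms by (auto simp: special_unitary_def)
  assume "\<exists>phi. unit_vec phi \<and> braket phi ((adjoint_mat V ** W) *v phi) = 0"
  then obtain phi where up: "unit_vec phi" and o: "braket (V *v phi) (W *v phi) = 0"
    by (auto simp: braket_prod)
  define u where "u = V *v phi"
  define w where "w = W *v phi"
  have uu: "unit_vec u" and uw: "unit_vec w"
    using up unitary_braket[OF uV] unitary_braket[OF uW] by (auto simp: unit_vec_def u_def w_def)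
  have uwo: "braket u w = 0" using o by (simp add: u_def w_def)
  obtain a :: 'n where True by blast
  have "\<exists>b::'n. a \<noteq> b"
  proof (rule ccontr)
    assume "\<not> (\<exists>b::'n. a \<noteq> b)"
    hence "(UNIV :: 'n set) = {a}" by auto
    hence "CARD('n) = card {a}" by (rule arg_cong)
    hence "CARD('n) = 1" by simp
    thus False using assms(1) by simp
  qed
  then obtain b :: 'n where ab: "a \<noteq> b" by blast
  define ea :: "complex^'n" where "ea = axis a 1"
  define eb :: "complex^'n" where "eb = axis b 1"
  have uea: "unit_vec ea" "unit_vec eb" by (auto simp: unit_vec_def ea_def eb_def braket_axis_axis)
  obtain c1 where c1: "cmod c1 = 1" "cnj (c1 * u $ a) = c1 * u $ a" using phase_exists by blast
  define u1 where "u1 = c1 *s u"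
  have uu1: "unit_vec u1" using unit_scale[OF uu c1(1)] by (simp add: u1_def)
  define H1 where "H1 = hh (ea - u1)"
  have H1a: "H1 ea = u1" unfolding H1_def
    by (rule hh_map[OF uea(1) uu1]) (unfold ea_def braket_axis u1_def vector_smult_component, rule c1(2))
  define w' where "w' = H1 w"
  have w'w: "H1 w' = w" by (simp add: w'_def H1_def hh_invol)
  have "braket ea w' = braket (H1 ea) (H1 w')" by (simp add: H1_def hh_braket)
  also have "\<dots> = 0" using uwo by (simp add: H1a w'w u1_def braket_scale_left)
  finally have eaw': "braket ea w' = 0" .
  have uw': "unit_vec w'" using uw by (simp add: unit_vec_def w'_def H1_def hh_braket)
  obtain c2 where c2: "cmod c2 = 1" "cnj (c2 * w' $ b) = c2 * w' $ b" using phase_exists by blast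
  define w2 where "w2 = c2 *s w'"
  have uw2: "unit_vec w2" using unit_scale[OF uw' c2(1)] by (simp add: w2_def)
  define H2 where "H2 = hh (eb - w2)"
  have H2b: "H2 eb = w2" unfolding H2_def
    by (rule hh_map[OF uea(2) uw2]) (unfold eb_def braket_axis w2_def vector_smult_component, rule c2(2))
  have "braket (eb - w2) ea = 0"
    using ab eaw' braket_cnj[of w' ea]
    by (simp add: braket_diff_left w2_def braket_scale_left eb_def ea_def braket_axis_axis)
  hence H2a: "H2 ea = ea" by (simp add: H2_def hh_fix)
  define chi where "chi i = H1 (H2 (axis i 1))" for i
  have ob: "orthonormal_basis chi"
    by (simp add: orthonormal_basis_def chi_def H1_def H2_def hh_braket braket_axis_axis)
  have chia: "chi a = c1 *s (V *v phi)"
    using H2a H1a by (simp add: chi_def ea_def u1_def u_def)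
  have chib: "chi b = c2 *s (W *v phi)"
    using H2b w'w by (simp add: chi_def eb_def w2_def H1_def hh_scale w_def)
  have "\<not> trivial_tester phi chi V W"
  proof
    assume "trivial_tester phi chi V W"
    then obtain c where c: "cmod c = 1" "w = c *s u" by (auto simp: trivial_tester_def u_def w_def)
    hence "braket u w = c" using uu by (simp add: braket_scale_right unit_vec_def)
    thus False using uwo c by auto
  qed
  moreover have "entropy_test phi chi V = 0" by (rule entropy_zero[OF ob c1(1) chia])
  moreover have "entropy_test phi chi W = 0" by (rule entropy_zero[OF ob c2(1) chib])
  moreover have "tester phi chi" using up ob by (simp add: tester_def)
  ultimately show "\<exists>psi chi. tester psi chi \<and> \<not> trivial_tester psi chi V W \<and>
            entropy_test psi chi V + entropy_test psi chi W = 0"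
    by (intro exI[of _ phi] exI[of _ chi]) simp
qed

end
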